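(* Let $d\ge1$, $\eta>0$, and let $\mathcal{D}$ be the distribution on $\mathbb{R}^d\times\{-1,+1\}$ with $y$ uniform on $\{-1,+1\}$, $\bm{\mu}=(\eta,\dots,\eta)$, $\bm{x}\mid y=+1\sim\mathcal{N}(\bm{\mu},I)$ and $\bm{x}\mid y=-1\sim\mathcal{N}(-\bm{\mu},I)$. Let $0<\epsilon_{-1}<\epsilon_{+1}<\eta$ and $0<\epsilon<\eta$. Consider linear classifiers $f(\bm{x})=\operatorname{sign}(\bm{w}^\top\bm{x}+b)$ with $\|\bm{w}\|_2=1$, $b\in\mathbb{R}$. Let $f_{rob}$ minimize the class-dependent robust error $\Pr(\exists\bm{\delta},\|\bm{\delta}\|_\infty\le\epsilon_y: f(\bm{x}+\bm{\delta})\ne y)$, and let $f_{rob,\epsilon}$ minimize the robust error $\Pr(\exists\bm{\delta},\|\bm{\delta}\|_\infty\le\epsilon: f(\bm{x}+\bm{\delta})\ne y)$ with the same margin $\epsilon$ for both classes. For a classifier $f$ let $\mathcal{R}_{rob,\epsilon}(f\mid y)=\Pr(\exists\bm{\delta},\|\bm{\delta}\|_\infty\le\epsilon: f(\bm{x}+\bm{\delta})\ne y\mid y)$. Then $$\mathcal{R}_{rob,\epsilon}(f_{rob}\mid -1)-\mathcal{R}_{rob,\epsilon}(f_{rob,\epsilon}\mid -1)>\mathcal{R}_{rob,\epsilon}(f_{rob}\mid +1)-\mathcal{R}_{rob,\epsilon}(f_{rob,\epsilon}\mid +1).$$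
   Context: $I$ denotes the $d\times d$ identity matrix. *)

theory Defs
  imports "HOL-Probability.Probability"
begin

definition gauss_cond :: "real \<Rightarrow> real \<Rightarrow> (real ^ 'd::finite) measure" where
  "gauss_cond eta y = density lborel (\<lambda>x. \<Prod>i\<in>UNIV. normal_density (y * eta) 1 (x $ i))"

definition lin_clf :: "real ^ 'd::finite \<Rightarrow> real \<Rightarrow> real ^ 'd \<Rightarrow> real" where
  "lin_clf w b x = sgn (w \<bullet> x + b)"

definition rob_err_cond :: "real \<Rightarrow> real ^ 'd::finite \<Rightarrow> real \<Rightarrow> real \<Rightarrow> real \<Rightarrow> real" where
  "rob_err_cond eta w b e y =
     measure (gauss_cond eta y)
       {x. \<exists>\<delta>::real ^ 'd. (\<forall>i. \<bar>\<delta> $ i\<bar> \<le> e) \<and> lin_clf w b (x + \<delta>) \<noteq> y}"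

definition rob_err_cd :: "real \<Rightarrow> real \<Rightarrow> real \<Rightarrow> real ^ 'd::finite \<Rightarrow> real \<Rightarrow> real" where
  "rob_err_cd eta e_pos e_neg w b =
     (1/2) * rob_err_cond eta w b e_pos 1 + (1/2) * rob_err_cond eta w b e_neg (-1)"

definition is_rob_minimizer :: "real \<Rightarrow> real \<Rightarrow> real \<Rightarrow> real ^ 'd::finite \<Rightarrow> real \<Rightarrow> bool" where
  "is_rob_minimizer eta e_pos e_neg w b \<longleftrightarrow>
     norm w = 1 \<and>
     (\<forall>(w'::real ^ 'd) b'. norm w' = 1 \<longrightarrow> rob_err_cd eta e_pos e_neg w b \<le> rob_err_cd eta e_pos e_neg w' b')"

end

theory Submission
  imports Defs
begin


definition Phi :: "real \<Rightarrow> real" where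
  "Phi t = measure (density lborel std_normal_density) {..t}"

lemma N_prob: "prob_space (density lborel (\<lambda>x. ennreal (std_normal_density x)))"
  by (rule prob_space_normal_density) simp

lemma emeasure_N: "A \<in> sets borel \<Longrightarrow> emeasure (density lborel (\<lambda>x. ennreal (std_normal_density x))) A
   = (\<integral>\<^sup>+x\<in>A. std_normal_density x \<partial>lborel)"
  by (simp add: emeasure_density)

lemma Phi_diff:
  assumes "a \<le> x"
  shows "Phi x - Phi a = integral {a..x} std_normal_density"
proof -
  let ?N = "density lborel (\<lambda>x. ennreal (std_normal_density x))"
  interpret N: prob_space ?N by (rule N_prob)
  have "Phi x = Phi a + measure ?N {a<..x}"
    unfolding Phi_def using assms
    by (subst N.finite_measure_Union[symmetric]) (auto intro!: arg_cong[where f="measure _"])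
  moreover have "emeasure ?N {a<..x} = (\<integral>\<^sup>+u\<in>{a<..<x}. std_normal_density u \<partial>lborel)"
    apply (subst emeasure_N, simp)
    apply (rule nn_integral_cong_AE)
    using AE_lborel_singleton[of x] by eventually_elim (auto simp: indicator_def)
  moreover have "(\<integral>\<^sup>+u\<in>{a<..<x}. std_normal_density u \<partial>lborel) = integral {a<..<x} std_normal_density"
  proof (rule set_nn_integral_lborel_eq_integral)
    show "set_borel_measurable borel {a<..<x} std_normal_density"
      unfolding set_borel_measurable_def by measurable
    have "(\<integral>\<^sup>+u\<in>{a<..<x}. std_normal_density u \<partial>lborel) \<le> (\<integral>\<^sup>+u. std_normal_density u \<partial>lborel)"
      by (intro nn_integral_mono) (auto simp: indicator_def)
    also have "\<dots> = 1"
      using N.emeasure_space_1 by (simp add: emeasure_density)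
    finally have "(\<integral>\<^sup>+u\<in>{a<..<x}. std_normal_density u \<partial>lborel) \<le> 1" .
    then show "(\<integral>\<^sup>+u\<in>{a<..<x}. std_normal_density u \<partial>lborel) < \<infinity>"
      unfolding infinity_ennreal_def using ennreal_one_less_top by (rule order.strict_trans1)
  qed simp
  moreover have "0 \<le> integral {a<..<x} std_normal_density"
    by (cases "std_normal_density integrable_on {a<..<x}")
       (auto intro: integral_nonneg simp: not_integrable_integral)
  ultimately have "measure ?N {a<..x} = integral {a<..<x} std_normal_density"
    by (simp add: measure_def)
  then show ?thesis using \<open>Phi x = _\<close>
    by (simp add: integral_open_interval_real[symmetric])
qed

lemma cont_snd: "continuous_on A std_normal_density"
  unfolding normal_density_def by (intro continuous_intros) simp

lemma Phi_deriv: "(Phi has_real_derivative std_normal_density x) (at x)"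
proof -
  let ?a = "x - 1" and ?b = "x + 1"
  have "((\<lambda>u. integral {?a..u} std_normal_density) has_real_derivative std_normal_density x) (at x within {?a..?b})"
    by (rule integral_has_real_derivative) (auto intro: cont_snd)
  then have "((\<lambda>u. integral {?a..u} std_normal_density) has_real_derivative std_normal_density x) (at x)"
    by (subst (asm) at_within_interior) auto
  note d = this
  have "((\<lambda>u. Phi ?a + integral {?a..u} std_normal_density) has_real_derivative std_normal_density x) (at x)"
    using DERIV_add[OF DERIV_const d] by simp
  then show ?thesis
  proof (rule has_field_derivative_transform_within_open[where S="{?a<..}"])
    fix u assume "u \<in> {?a<..}"
    then show "Phi ?a + integral {?a..u} std_normal_density = Phi u"
      using Phi_diff[of ?a u] by simp
  qed auto
qed

lemma snd_pos: "std_normal_density x > 0"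
  by (rule normal_density_pos) simp

lemma Phi_strict_mono: "x < y \<Longrightarrow> Phi x < Phi y"
  by (rule DERIV_pos_imp_increasing) (auto intro!: exI Phi_deriv snd_pos)

lemma Phi_mono: "x \<le> y \<Longrightarrow> Phi x \<le> Phi y"
  using Phi_strict_mono[of x y] by (cases "x = y") auto

lemma snd_even: "std_normal_density (- x) = std_normal_density x"
  by (simp add: normal_density_def)

lemma Phi_sym: "Phi (- t) + Phi t = 2 * Phi 0"
proof -
  have "\<forall>x. ((\<lambda>t. Phi (- t) + Phi t) has_real_derivative 0) (at x)"
  proof
    fix x
    have "((\<lambda>t. Phi (- t) + Phi t) has_real_derivative (std_normal_density (- x) * (- 1) + std_normal_density x)) (at x)"
      by (intro DERIV_add DERIV_chain2[OF Phi_deriv] DERIV_minus DERIV_ident Phi_deriv)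
    then show "((\<lambda>t. Phi (- t) + Phi t) has_real_derivative 0) (at x)"
      by (simp add: snd_even)
  qed
  from DERIV_isconst_all[OF this, of t 0] show ?thesis by simp
qed

lemma snd_less: "\<bar>x\<bar> < \<bar>y\<bar> \<Longrightarrow> std_normal_density y < std_normal_density x"
proof -
  assume a: "\<bar>x\<bar> < \<bar>y\<bar>"
  have "\<bar>x\<bar>^2 < \<bar>y\<bar>^2" using a by (intro power_strict_mono) auto
  then have "x^2 < y^2" by simp
  then have "exp (- (y^2) / 2) < exp (- (x^2) / 2)" by simp
  then show ?thesis unfolding std_normal_density_def
    by (intro mult_strict_left_mono) auto
qed

lemma Phi_pair_pos:
  assumes h: "h > 0" and t: "t > 0"
  shows "Phi (- h - t) + Phi (- h + t) > 2 * Phi (- h)"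
proof -
  define k where "k u = Phi (- h + u) + Phi (- h - u)" for u
  have der: "DERIV k u :> std_normal_density (- h + u) - std_normal_density (- h - u)" for u
  proof -
    have "DERIV k u :> std_normal_density (- h + u) * 1 + std_normal_density (- h - u) * (- 1)"
      unfolding k_def
      by (intro DERIV_add DERIV_chain2[OF Phi_deriv] derivative_eq_intros) auto
    then show ?thesis by simp
  qed
  obtain z where z: "0 < z" "z < t" "k t - k 0 = (t - 0) * (std_normal_density (- h + z) - std_normal_density (- h - z))"
    using MVT2[OF t der] by blast
  have "\<bar>- h + z\<bar> < \<bar>- h - z\<bar>" using h z by auto
  then have "std_normal_density (- h + z) - std_normal_density (- h - z) > 0"
    using snd_less by auto
  then have "k t - k 0 > 0" using z t by simp
  then show ?thesis unfolding k_def by simp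
qed

lemma Phi_pair:
  assumes h: "h > 0" and t: "t \<noteq> 0"
  shows "Phi (- h - t) + Phi (- h + t) > 2 * Phi (- h)"
proof (cases "t > 0")
  case True then show ?thesis using Phi_pair_pos[OF h] by blast
next
  case False
  then have "- t > 0" using t by simp
  from Phi_pair_pos[OF h this] show ?thesis by (simp add: add.commute)
qed

lemma Phi_G:
  assumes hs: "hs > 0" and hle: "h \<le> hs"
  shows "Phi (- h - t) + Phi (- h + t) \<ge> 2 * Phi (- hs)"
    and "Phi (- h - t) + Phi (- h + t) = 2 * Phi (- hs) \<Longrightarrow> t = 0 \<and> h = hs"
proof -
  have "Phi (- h - t) + Phi (- h + t) \<ge> 2 * Phi (- hs) \<and>
        (Phi (- h - t) + Phi (- h + t) = 2 * Phi (- hs) \<longrightarrow> t = 0 \<and> h = hs)"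
  proof (cases "h > 0")
    case False
    have "2 * Phi 0 = Phi (- t) + Phi t" by (rule Phi_sym[symmetric])
    also have "\<dots> \<le> Phi (- h - t) + Phi (- h + t)"
      using False by (intro add_mono Phi_mono) auto
    finally have "Phi (- h - t) + Phi (- h + t) \<ge> 2 * Phi 0" .
    moreover have "Phi (- hs) < Phi 0" using hs by (intro Phi_strict_mono) auto
    ultimately show ?thesis by auto
  next
    case True
    have 1: "Phi (- h - t) + Phi (- h + t) \<ge> 2 * Phi (- h)"
      using Phi_pair[OF True, of t] by (cases "t = 0") auto
    have 2: "Phi (- h) \<ge> Phi (- hs)" using hle by (intro Phi_mono) auto
    have 3: "t = 0" if "Phi (- h - t) + Phi (- h + t) = 2 * Phi (- hs)"
      using Phi_pair[OF True, of t] 2 that by (cases "t = 0") auto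
    have 4: "h = hs" if "Phi (- h - t) + Phi (- h + t) = 2 * Phi (- hs)"
      using Phi_strict_mono[of "- hs" "- h"] 1 hle that by (cases "h = hs") auto
    show ?thesis using 1 2 3 4 by auto
  qed
  then show "Phi (- h - t) + Phi (- h + t) \<ge> 2 * Phi (- hs)"
    and "Phi (- h - t) + Phi (- h + t) = 2 * Phi (- hs) \<Longrightarrow> t = 0 \<and> h = hs" by auto
qed



lemma Basis_vec_eq: "(Basis :: (real^'d) set) = range (\<lambda>i. axis i 1)"
  by (auto simp: Basis_vec_def Basis_real_def)

lemma inj_axis1: "inj (\<lambda>i::'d::finite. axis i (1::real))"
  by (auto simp: inj_def axis_eq_axis)

lemma prod_Basis_vec: "(\<Prod>b\<in>(Basis::(real^'d::finite) set). g b) = (\<Prod>i\<in>UNIV. g (axis i 1))"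
  unfolding Basis_vec_eq by (subst prod.reindex[OF inj_axis1]) simp

lemma sum_Basis_vec: "(\<Sum>b\<in>(Basis::(real^'d::finite) set). g b) = (\<Sum>i\<in>UNIV. g (axis i 1))"
  unfolding Basis_vec_eq by (subst sum.reindex[OF inj_axis1]) simp

lemma indicator_PiE_prod:
  assumes "finite I" "x \<in> extensional I"
  shows "(indicator (PiE I A) x :: ennreal) = (\<Prod>i\<in>I. indicator (A i) (x i))"
proof (cases "x \<in> PiE I A")
  case True then show ?thesis by (auto simp: PiE_iff indicator_def intro!: prod.neutral)
next
  case False
  then obtain i where "i \<in> I" "x i \<notin> A i" using assms by (auto simp: PiE_iff)
  then show ?thesis using False assms by (auto simp: indicator_def prod_zero_iff)
qed

lemma PiM_density_lborel:
  fixes I :: "'i set" and g :: "real \<Rightarrow> real"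
  assumes fin: "finite I" and gm[measurable]: "g \<in> borel_measurable borel" and gnn: "\<And>x. 0 \<le> g x"
    and pg: "prob_space (density lborel g)"
  shows "PiM I (\<lambda>_. density lborel g) = density (PiM I (\<lambda>_. lborel)) (\<lambda>f. \<Prod>i\<in>I. ennreal (g (f i)))"
proof -
  interpret P: product_prob_space "\<lambda>_::'i. density lborel g"
    using pg by (rule product_prob_spaceI)
  interpret L: product_sigma_finite "\<lambda>_::'i. lborel :: real measure"
    by standard
  show ?thesis
  proof (rule P.PiM_eqI[symmetric])
    show "finite I" by fact
    show "sets (density (PiM I (\<lambda>_. lborel)) (\<lambda>f. \<Prod>i\<in>I. ennreal (g (f i)))) = sets (PiM I (\<lambda>_. density lborel g))"
      by (simp only: sets_density) (rule sets_PiM_cong; simp)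
  next
    fix A assume A: "\<And>i. i \<in> I \<Longrightarrow> A i \<in> sets (density lborel g)"
    then have A': "\<And>i. i \<in> I \<Longrightarrow> A i \<in> sets borel" by simp
    have "PiE I A \<in> sets (PiM I (\<lambda>_. lborel))"
      using A' by (intro sets_PiM_I_finite fin) auto
    then have "emeasure (density (PiM I (\<lambda>_. lborel)) (\<lambda>f. \<Prod>i\<in>I. ennreal (g (f i)))) (PiE I A)
        = (\<integral>\<^sup>+f. (\<Prod>i\<in>I. ennreal (g (f i))) * indicator (PiE I A) f \<partial>PiM I (\<lambda>_. lborel))"
      by (subst emeasure_density) (auto intro!: borel_measurable_prod_ennreal)
    also have "\<dots> = (\<integral>\<^sup>+f. (\<Prod>i\<in>I. ennreal (g (f i)) * indicator (A i) (f i)) \<partial>PiM I (\<lambda>_. lborel))"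
      by (intro nn_integral_cong, subst indicator_PiE_prod[OF fin]) (auto simp: space_PiM PiE_def prod.distrib)
    also have "\<dots> = (\<Prod>i\<in>I. \<integral>\<^sup>+x. ennreal (g x) * indicator (A i) x \<partial>lborel)"
      using A' by (intro L.product_nn_integral_prod fin) auto
    also have "\<dots> = (\<Prod>i\<in>I. emeasure (density lborel g) (A i))"
      using A' by (intro prod.cong refl) (simp add: emeasure_density)
    finally show "emeasure (density (PiM I (\<lambda>_. lborel)) (\<lambda>f. \<Prod>i\<in>I. ennreal (g (f i)))) (PiE I A)
        = (\<Prod>i\<in>I. emeasure (density lborel g) (A i))" .
  qed
qed

abbreviation "Tv \<equiv> (\<lambda>f. \<Sum>b\<in>(Basis :: (real^'d::finite) set). f b *\<^sub>R b)"

lemma Tv_nth: "(Tv f :: real^'d::finite) $ i = f (axis i 1)"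
proof -
  have "(Tv f :: real^'d) $ i = (Tv f :: real^'d) \<bullet> axis i 1" by (rule cart_eq_inner_axis)
  also have "\<dots> = (\<Sum>b\<in>(Basis :: (real^'d) set). f b * (b \<bullet> axis i 1))"
    by (simp add: inner_sum_left)
  also have "\<dots> = (\<Sum>b\<in>(Basis :: (real^'d) set). if b = axis i 1 then f b else 0)"
    by (intro sum.cong refl) (simp add: inner_Basis)
  also have "\<dots> = f (axis i 1)" by simp
  finally show ?thesis .
qed

lemma gauss_cond_distr:
  "gauss_cond eta y = distr (PiM (Basis::(real^'d::finite) set) (\<lambda>_. density lborel (normal_density (y * eta) 1))) borel Tv"
proof -
  let ?g = "normal_density (y * eta) 1"
  let ?P0 = "PiM (Basis::(real^'d) set) (\<lambda>_. lborel :: real measure)"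
  let ?G = "\<lambda>x::real^'d. ennreal (\<Prod>i\<in>UNIV. ?g (x $ i))"
  have Tm[measurable]: "Tv \<in> measurable ?P0 (borel :: (real^'d) measure)"
    by measurable
  have "gauss_cond eta y = density lborel ?G" unfolding gauss_cond_def by simp
  also have "\<dots> = density (distr ?P0 borel Tv) ?G"
    by (subst lborel_eq[where 'a="real^'d"]) simp
  also have "\<dots> = distr (density ?P0 (\<lambda>f. ?G (Tv f))) borel Tv"
    by (rule density_distr) measurable
  also have "(\<lambda>f. ?G (Tv f)) = (\<lambda>f. \<Prod>b\<in>Basis. ennreal (?g (f b)))"
  proof
    fix f :: "real^'d \<Rightarrow> real"
    have "?G (Tv f) = ennreal (\<Prod>i\<in>UNIV. ?g (f (axis i 1)))" by (simp only: Tv_nth)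
    also have "\<dots> = ennreal (\<Prod>b\<in>Basis. ?g (f b))" by (simp add: prod_Basis_vec)
    also have "\<dots> = (\<Prod>b\<in>Basis. ennreal (?g (f b)))" by (simp add: prod_ennreal)
    finally show "?G (Tv f) = (\<Prod>b\<in>Basis. ennreal (?g (f b)))" .
  qed
  also have "density ?P0 (\<lambda>f. \<Prod>b\<in>Basis. ennreal (?g (f b))) = PiM Basis (\<lambda>_. density lborel ?g)"
    by (rule PiM_density_lborel[symmetric]) (auto intro: prob_space_normal_density)
  finally show ?thesis .
qed

lemma w_dot_distributed:
  fixes w :: "real^'d::finite"
  assumes nw: "norm w = 1"
  shows "distributed (gauss_cond eta y) lborel (\<lambda>x. w \<bullet> x) (\<lambda>z. ennreal (normal_density (y * eta * (\<Sum>i\<in>UNIV. w $ i)) 1 z))"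
proof -
  let ?N = "density lborel (\<lambda>z. ennreal (normal_density (y * eta) 1 z))"
  let ?P = "PiM (Basis::(real^'d) set) (\<lambda>_. ?N)"
  have pN: "prob_space ?N" by (rule prob_space_normal_density) simp
  interpret PP: product_prob_space "\<lambda>_::real^'d. ?N"
    using pN by (rule product_prob_spaceI)
  interpret P: prob_space ?P
    by (rule prob_space_PiM) (simp add: pN)
  have comp: "distr ?P M (\<lambda>f. f b) = ?N" if "b \<in> Basis" "sets M = sets borel" for b and M :: "real measure"
  proof -
    have "distr ?P M (\<lambda>f. f b) = distr ?P ?N (\<lambda>f. f b)"
      by (rule distr_cong) (simp_all add: that)
    also have "\<dots> = ?N" by (rule distr_PiM_component) (simp_all add: pN that)
    finally show ?thesis .
  qed
  have coord: "distributed ?P lborel (\<lambda>f. f b) (\<lambda>z. ennreal (normal_density (y * eta) 1 z))"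
    if "b \<in> Basis" for b
    unfolding distributed_def using that by (auto simp: comp)
  have indep: "P.indep_vars (\<lambda>_. borel) (\<lambda>b f. f b) Basis"
  proof (subst P.indep_vars_iff_distr_eq_PiM')
    show "Basis \<noteq> {}" by simp
    show "(\<lambda>f. f b) \<in> measurable ?P borel" if "b \<in> Basis" for b :: "real^'d"
    proof -
      have "(\<lambda>f. f b) \<in> measurable ?P ?N" using that by (rule measurable_component_singleton)
      moreover have "measurable ?P ?N = measurable ?P borel"
        by (rule measurable_cong_sets) simp_all
      ultimately show ?thesis by simp
    qed
    have "distr ?P (PiM Basis (\<lambda>_. borel)) (\<lambda>x. \<lambda>i\<in>Basis. x i) = distr ?P ?P (\<lambda>x. x)"
      by (rule distr_cong) (auto simp: space_PiM intro!: sets_PiM_cong)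
    also have "\<dots> = ?P" by simp
    also have "\<dots> = PiM Basis (\<lambda>i. distr ?P borel (\<lambda>x. x i))"
      by (rule PiM_cong) (simp_all add: comp)
    finally show "distr ?P (PiM Basis (\<lambda>_. borel)) (\<lambda>x. \<lambda>i\<in>Basis. x i) = PiM Basis (\<lambda>i. distr ?P borel (\<lambda>x. x i))" .
  qed
  define I where "I = {b \<in> (Basis::(real^'d) set). w \<bullet> b \<noteq> 0}"
  have IB: "I \<subseteq> Basis" unfolding I_def by auto
  have finI: "finite I" by (rule finite_subset[OF IB]) simp
  have Ine: "I \<noteq> {}"
  proof
    assume "I = {}"
    then have "\<forall>b\<in>Basis. w \<bullet> b = 0" unfolding I_def by auto
    then have "w = 0" by (simp add: euclidean_all_zero_iff)
    then show False using nw by simp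
  qed
  have Xd: "distributed ?P lborel (\<lambda>f. (w \<bullet> b) * f b) (\<lambda>z. ennreal (normal_density ((w \<bullet> b) * (y * eta)) \<bar>w \<bullet> b\<bar> z))"
    if "b \<in> I" for b
    using P.normal_density_affine[OF coord[of b], of "w \<bullet> b" 0] that by (simp add: I_def)
  have Xi: "P.indep_vars (\<lambda>_. borel) (\<lambda>b f. (w \<bullet> b) * f b) I"
    using P.indep_vars_compose2[OF P.indep_vars_subset[OF indep IB], of "\<lambda>b z. (w \<bullet> b) * z" "\<lambda>_. borel"]
    by simp
  have S: "distributed ?P lborel (\<lambda>f. \<Sum>b\<in>I. (w \<bullet> b) * f b)
      (\<lambda>z. ennreal (normal_density (\<Sum>b\<in>I. (w \<bullet> b) * (y * eta)) (sqrt (\<Sum>b\<in>I. \<bar>w \<bullet> b\<bar>\<^sup>2)) z))"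
    by (rule P.sum_indep_normal[OF finI Ine Xi]) (auto simp: I_def Xd)
  have e1: "(\<Sum>b\<in>I. (w \<bullet> b) * f b) = w \<bullet> Tv f" for f
  proof -
    have "(\<Sum>b\<in>I. (w \<bullet> b) * f b) = (\<Sum>b\<in>Basis. (w \<bullet> b) * f b)"
      by (rule sum.mono_neutral_left) (auto simp: I_def)
    also have "\<dots> = w \<bullet> Tv f" by (simp add: inner_sum_right mult.commute)
    finally show ?thesis .
  qed
  have e2: "(\<Sum>b\<in>I. (w \<bullet> b) * (y * eta)) = y * eta * (\<Sum>i\<in>UNIV. w $ i)"
  proof -
    have "(\<Sum>b\<in>I. (w \<bullet> b) * (y * eta)) = (\<Sum>b\<in>Basis. (w \<bullet> b) * (y * eta))"
      by (rule sum.mono_neutral_left) (auto simp: I_def)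
    also have "\<dots> = (\<Sum>i\<in>UNIV. (w \<bullet> axis i 1) * (y * eta))" by (rule sum_Basis_vec)
    also have "\<dots> = y * eta * (\<Sum>i\<in>UNIV. w $ i)"
      by (simp add: cart_eq_inner_axis[symmetric] sum_distrib_left mult.commute)
    finally show ?thesis .
  qed
  have e3: "sqrt (\<Sum>b\<in>I. \<bar>w \<bullet> b\<bar>\<^sup>2) = 1"
  proof -
    have "(\<Sum>b\<in>I. \<bar>w \<bullet> b\<bar>\<^sup>2) = (\<Sum>b\<in>I. (w \<bullet> b) * (w \<bullet> b))"
      by (simp add: power2_eq_square)
    also have "\<dots> = (\<Sum>b\<in>Basis. (w \<bullet> b) * (w \<bullet> b))"
      by (rule sum.mono_neutral_left) (auto simp: I_def)
    also have "\<dots> = w \<bullet> w" by (rule euclidean_inner[symmetric])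
    also have "\<dots> = 1" using nw by (simp add: power2_norm_eq_inner[symmetric])
    finally show ?thesis by simp
  qed
  have S': "distributed ?P lborel (\<lambda>f. w \<bullet> Tv f) (\<lambda>z. ennreal (normal_density (y * eta * (\<Sum>i\<in>UNIV. w $ i)) 1 z))"
    using S unfolding e2 e3 unfolding e1 .
  have Tm[measurable]: "Tv \<in> measurable ?P (borel :: (real^'d) measure)"
  proof -
    have "Tv \<in> measurable (PiM (Basis::(real^'d) set) (\<lambda>_. borel :: real measure)) (borel :: (real^'d) measure)"
      by measurable
    moreover have "measurable ?P (borel :: (real^'d) measure) = measurable (PiM (Basis::(real^'d) set) (\<lambda>_. borel :: real measure)) (borel :: (real^'d) measure)"
      by (rule measurable_cong_sets[OF sets_PiM_cong refl]) simp_all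
    ultimately show ?thesis by simp
  qed
  have wm: "(\<lambda>x. w \<bullet> x) \<in> measurable (borel :: (real^'d) measure) lborel"
    unfolding measurable_lborel1 by measurable
  have "distr (gauss_cond eta y) lborel (\<lambda>x. w \<bullet> x) = distr (distr ?P borel Tv) lborel (\<lambda>x. w \<bullet> x)"
    by (simp only: gauss_cond_distr)
  also have "\<dots> = distr ?P lborel ((\<lambda>x. w \<bullet> x) \<circ> Tv)"
    by (rule distr_distr[OF wm Tm])
  finally have "distr (gauss_cond eta y) lborel (\<lambda>x. w \<bullet> x) = distr ?P lborel (\<lambda>f. w \<bullet> Tv f)"
    by (simp add: comp_def)
  moreover have "(\<lambda>x. w \<bullet> x) \<in> measurable (gauss_cond eta y) lborel"
    using wm by (simp add: gauss_cond_def)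
  ultimately show ?thesis
    using S' unfolding distributed_def by simp
qed



lemma sgn_ne_iff:
  assumes "y = 1 \<or> y = -1"
  shows "sgn (z::real) \<noteq> y \<longleftrightarrow> y * z \<le> 0"
  using assms by (auto simp: sgn_if)

lemma err_set:
  fixes w :: "real^'d::finite"
  assumes y: "y = 1 \<or> y = -1" and e: "0 \<le> e"
  shows "{x. \<exists>\<delta>::real^'d. (\<forall>i. \<bar>\<delta> $ i\<bar> \<le> e) \<and> lin_clf w b (x + \<delta>) \<noteq> y}
       = {x. y * (w \<bullet> x) \<le> e * (\<Sum>i\<in>UNIV. \<bar>w $ i\<bar>) - y * b}"
proof (intro set_eqI iffI; simp only: mem_Collect_eq)
  fix x :: "real^'d"
  assume "\<exists>\<delta>::real^'d. (\<forall>i. \<bar>\<delta> $ i\<bar> \<le> e) \<and> lin_clf w b (x + \<delta>) \<noteq> y"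
  then obtain \<delta> :: "real^'d" where d: "\<forall>i. \<bar>\<delta> $ i\<bar> \<le> e" and ne: "lin_clf w b (x + \<delta>) \<noteq> y"
    by blast
  have 1: "y * (w \<bullet> x + w \<bullet> \<delta> + b) \<le> 0"
    using ne sgn_ne_iff[OF y] by (simp add: lin_clf_def inner_add_right)
  have 2: "\<bar>w \<bullet> \<delta>\<bar> \<le> e * (\<Sum>i\<in>UNIV. \<bar>w $ i\<bar>)"
  proof -
    have "\<bar>w \<bullet> \<delta>\<bar> = \<bar>\<Sum>i\<in>UNIV. w $ i * \<delta> $ i\<bar>" by (simp add: inner_vec_def)
    also have "\<dots> \<le> (\<Sum>i\<in>UNIV. \<bar>w $ i * \<delta> $ i\<bar>)" by (rule sum_abs)
    also have "\<dots> \<le> (\<Sum>i\<in>UNIV. \<bar>w $ i\<bar> * e)"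
      by (intro sum_mono) (simp add: abs_mult mult_left_mono d)
    also have "\<dots> = e * (\<Sum>i\<in>UNIV. \<bar>w $ i\<bar>)" by (simp add: sum_distrib_left mult.commute)
    finally show ?thesis .
  qed
  have 3: "- (y * (w \<bullet> \<delta>)) \<le> \<bar>w \<bullet> \<delta>\<bar>" using y by auto
  have 4: "y * (w \<bullet> x + w \<bullet> \<delta> + b) = y * (w \<bullet> x) + y * (w \<bullet> \<delta>) + y * b"
    by (simp add: algebra_simps)
  show "y * (w \<bullet> x) \<le> e * (\<Sum>i\<in>UNIV. \<bar>w $ i\<bar>) - y * b"
    using 1 2 3 4 by linarith
next
  fix x :: "real^'d"
  assume a: "y * (w \<bullet> x) \<le> e * (\<Sum>i\<in>UNIV. \<bar>w $ i\<bar>) - y * b"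
  define \<delta> :: "real^'d" where "\<delta> = (\<chi> i. - (y * e * sgn (w $ i)))"
  have yy: "y * y = 1" using y by auto
  have d: "\<forall>i. \<bar>\<delta> $ i\<bar> \<le> e"
  proof
    fix i
    have "\<bar>\<delta> $ i\<bar> = e * \<bar>sgn (w $ i)\<bar>" using y e by (auto simp: \<delta>_def abs_mult)
    also have "\<dots> \<le> e * 1" using e by (intro mult_left_mono) (auto simp: sgn_if)
    finally show "\<bar>\<delta> $ i\<bar> \<le> e" by simp
  qed
  have wd: "w \<bullet> \<delta> = - (y * e * (\<Sum>i\<in>UNIV. \<bar>w $ i\<bar>))"
  proof -
    have "w \<bullet> \<delta> = (\<Sum>i\<in>UNIV. - (y * e * (w $ i * sgn (w $ i))))"
      by (simp add: inner_vec_def \<delta>_def algebra_simps)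
    also have "\<dots> = (\<Sum>i\<in>UNIV. - (y * e * \<bar>w $ i\<bar>))"
      by (intro sum.cong refl) (simp add: sgn_if abs_if)
    also have "\<dots> = - (y * e * (\<Sum>i\<in>UNIV. \<bar>w $ i\<bar>))"
      by (simp add: sum_negf sum_distrib_left)
    finally show ?thesis .
  qed
  have "y * (w \<bullet> (x + \<delta>) + b) = y * (w \<bullet> x) - (y * y) * e * (\<Sum>i\<in>UNIV. \<bar>w $ i\<bar>) + y * b"
    by (simp add: inner_add_right wd algebra_simps)
  also have "\<dots> \<le> 0" using a yy by simp
  finally have "lin_clf w b (x + \<delta>) \<noteq> y"
    using sgn_ne_iff[OF y] by (simp add: lin_clf_def)
  then show "\<exists>\<delta>::real^'d. (\<forall>i. \<bar>\<delta> $ i\<bar> \<le> e) \<and> lin_clf w b (x + \<delta>) \<noteq> y"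
    using d by blast
qed

lemma gauss_cond_prob: "prob_space (gauss_cond eta y :: (real^'d::finite) measure)"
proof -
  let ?N = "density lborel (\<lambda>z. ennreal (normal_density (y * eta) 1 z))"
  have pN: "prob_space ?N" by (rule prob_space_normal_density) simp
  have "prob_space (PiM (Basis::(real^'d) set) (\<lambda>_. ?N))"
    by (rule prob_space_PiM) (simp add: pN)
  then show ?thesis unfolding gauss_cond_distr
    by (rule prob_space.prob_space_distr) measurable
qed

lemma rob_err_formula:
  fixes w :: "real^'d::finite"
  assumes nw: "norm w = 1" and y: "y = 1 \<or> y = -1" and e: "0 \<le> e"
  shows "rob_err_cond eta w b e y = Phi (e * (\<Sum>i\<in>UNIV. \<bar>w $ i\<bar>) - y * b - eta * (\<Sum>i\<in>UNIV. w $ i))"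
proof -
  let ?s = "\<Sum>i\<in>UNIV. w $ i"
  let ?c = "e * (\<Sum>i\<in>UNIV. \<bar>w $ i\<bar>) - y * b"
  let ?G = "gauss_cond eta y :: (real^'d) measure"
  interpret G: prob_space ?G by (rule gauss_cond_prob)
  have D: "distributed ?G lborel (\<lambda>x. w \<bullet> x) (\<lambda>z. ennreal (normal_density (y * eta * ?s) 1 z))"
    by (rule w_dot_distributed[OF nw])
  have D1: "distributed ?G lborel (\<lambda>x. (- (eta * ?s)) + y * (w \<bullet> x))
      (\<lambda>z. ennreal (normal_density (- (eta * ?s) + y * (y * eta * ?s)) (\<bar>y\<bar> * 1) z))"
    by (rule G.normal_density_affine[OF D]) (use y in auto)
  have e0: "- (eta * ?s) + y * (y * eta * ?s) = 0" using y by auto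
  have e1: "\<bar>y\<bar> * 1 = 1" using y by auto
  have D2: "distributed ?G lborel (\<lambda>x. (- (eta * ?s)) + y * (w \<bullet> x)) (\<lambda>z. ennreal (std_normal_density z))"
    using D1 unfolding e0 e1 .
  have sp: "space ?G = UNIV" by (simp add: gauss_cond_def)
  have "rob_err_cond eta w b e y = measure ?G {x. y * (w \<bullet> x) \<le> ?c}"
    unfolding rob_err_cond_def by (subst err_set[OF y e]) rule
  also have "{x. y * (w \<bullet> x) \<le> ?c} = (\<lambda>x. (- (eta * ?s)) + y * (w \<bullet> x)) -` {..?c - eta * ?s} \<inter> space ?G"
    by (auto simp: sp)
  also have "measure ?G \<dots> = measure (distr ?G lborel (\<lambda>x. (- (eta * ?s)) + y * (w \<bullet> x))) {..?c - eta * ?s}"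
    using D2 by (subst measure_distr) (auto simp: distributed_def)
  also have "\<dots> = Phi (?c - eta * ?s)"
    using D2 by (simp add: distributed_def Phi_def)
  finally show ?thesis .
qed



lemma sum_sq_norm: "norm (w::real^'d::finite) = 1 \<Longrightarrow> (\<Sum>i\<in>UNIV. w $ i * w $ i) = 1"
  by (metis inner_vec_def norm_eq_1 real_inner_1_right inner_real_def)

lemma s_le_L: "(\<Sum>i\<in>UNIV. (w::real^'d::finite) $ i) \<le> (\<Sum>i\<in>UNIV. \<bar>w $ i\<bar>)"
  by (intro sum_mono) simp

lemma L_le_r:
  fixes w :: "real^'d::finite"
  assumes nw: "norm w = 1"
  shows "(\<Sum>i\<in>UNIV. \<bar>w $ i\<bar>) \<le> sqrt (real CARD('d))"
proof -
  let ?r = "sqrt (real CARD('d))"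
  let ?L = "\<Sum>i\<in>UNIV. \<bar>w $ i\<bar>"
  have r: "?r > 0" by simp
  have rr: "?r * ?r = real CARD('d)" by simp
  have trm: "(?r * \<bar>a\<bar> - 1)\<^sup>2 = ?r * ?r * (a * a) - 2 * ?r * \<bar>a\<bar> + 1" for a :: real
  proof -
    have "(?r * \<bar>a\<bar> - 1)\<^sup>2 = ?r * ?r * (\<bar>a\<bar> * \<bar>a\<bar>) - 2 * ?r * \<bar>a\<bar> + 1"
      by (simp add: power2_eq_square algebra_simps)
    then show ?thesis by (simp only: abs_mult_self_eq)
  qed
  have "0 \<le> (\<Sum>i\<in>UNIV. (?r * \<bar>w $ i\<bar> - 1)\<^sup>2)" by (intro sum_nonneg) simp
  also have "\<dots> = (\<Sum>i\<in>UNIV. ?r * ?r * (w $ i * w $ i) - 2 * ?r * \<bar>w $ i\<bar> + 1)"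
    by (simp only: trm)
  also have "\<dots> = ?r * ?r * (\<Sum>i\<in>UNIV. w $ i * w $ i) - 2 * ?r * ?L + real CARD('d)"
    by (simp add: sum.distrib sum_subtractf sum_distrib_left)
  also have "\<dots> = 2 * real CARD('d) - 2 * ?r * ?L"
    using sum_sq_norm[OF nw] rr by simp
  finally have "?r * ?L \<le> ?r * ?r" using rr by simp
  then show ?thesis using r by (rule mult_left_le_imp_le) 
qed

definition uvec :: "real^'d::finite" where "uvec = (\<chi> i. 1 / sqrt (real CARD('d)))"

lemma uvec_props:
  shows "norm (uvec :: real^'d::finite) = 1"
    and "(\<Sum>i\<in>UNIV. (uvec :: real^'d) $ i) = sqrt (real CARD('d))"
    and "(\<Sum>i\<in>UNIV. \<bar>(uvec :: real^'d) $ i\<bar>) = sqrt (real CARD('d))"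
proof -
  let ?r = "sqrt (real CARD('d))"
  have r: "?r > 0" by simp
  have rr: "?r * ?r = real CARD('d)" by simp
  have c0: "real CARD('d) > 0" by simp
  have d: "real CARD('d) / ?r = ?r"
  proof -
    have "real CARD('d) / ?r = ?r * ?r / ?r" by (simp only: rr)
    also have "\<dots> = ?r" by (rule nonzero_mult_div_cancel_right) (use r in simp)
    finally show ?thesis .
  qed
  have "uvec \<bullet> uvec = (\<Sum>i\<in>(UNIV::'d set). 1 / ?r * (1 / ?r))"
    by (simp add: uvec_def inner_vec_def)
  also have "\<dots> = real CARD('d) * (1 / (?r * ?r))" by simp
  also have "\<dots> = 1" unfolding rr using c0 by simp
  finally show "norm (uvec :: real^'d) = 1" by (simp add: norm_eq_sqrt_inner)
  have "(\<Sum>i\<in>UNIV. (uvec :: real^'d) $ i) = (\<Sum>i\<in>(UNIV::'d set). 1 / ?r)" by (simp add: uvec_def)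
  also have "\<dots> = real CARD('d) / ?r" by simp
  finally show "(\<Sum>i\<in>UNIV. (uvec :: real^'d) $ i) = ?r" unfolding d .
  have "(\<Sum>i\<in>UNIV. \<bar>(uvec :: real^'d) $ i\<bar>) = (\<Sum>i\<in>(UNIV::'d set). 1 / ?r)" by (simp add: uvec_def)
  also have "\<dots> = real CARD('d) / ?r" by simp
  finally show "(\<Sum>i\<in>UNIV. \<bar>(uvec :: real^'d) $ i\<bar>) = ?r" unfolding d .
qed

lemma cd_formula:
  fixes w :: "real^'d::finite"
  assumes "norm w = 1" "0 \<le> ep" "0 \<le> en"
  shows "rob_err_cd eta ep en w b =
    (1/2) * Phi (ep * (\<Sum>i\<in>UNIV. \<bar>w $ i\<bar>) - b - eta * (\<Sum>i\<in>UNIV. w $ i))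
  + (1/2) * Phi (en * (\<Sum>i\<in>UNIV. \<bar>w $ i\<bar>) + b - eta * (\<Sum>i\<in>UNIV. w $ i))"
  unfolding rob_err_cd_def
  using rob_err_formula[OF assms(1), of 1 ep eta b] rob_err_formula[OF assms(1), of "-1" en eta b] assms
  by simp

lemma minimizer_char:
  fixes w :: "real^'d::finite"
  assumes eta: "eta > 0" and ep: "0 \<le> en" "en \<le> ep" "ep < eta"
    and m: "is_rob_minimizer eta ep en w b"
  shows "(\<Sum>i\<in>UNIV. w $ i) = sqrt (real CARD('d)) \<and> (\<Sum>i\<in>UNIV. \<bar>w $ i\<bar>) = sqrt (real CARD('d))
         \<and> b = (ep - en) / 2 * sqrt (real CARD('d))"
proof -
  let ?r = "sqrt (real CARD('d))"
  define s where "s = (\<Sum>i\<in>UNIV. w $ i)"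
  define L where "L = (\<Sum>i\<in>UNIV. \<bar>w $ i\<bar>)"
  define eb where "eb = (ep + en) / 2"
  define D where "D = (ep - en) / 2"
  define h where "h = eta * s - eb * L"
  define t where "t = b - D * L"
  define hs where "hs = (eta - eb) * ?r"
  have nw: "norm w = 1" using m by (simp add: is_rob_minimizer_def)
  have r: "?r > 0" by simp
  have ebl: "eb < eta" using ep unfolding eb_def by simp
  have hs: "hs > 0" unfolding hs_def using ebl r by simp
  have sL: "s \<le> L" unfolding s_def L_def by (rule s_le_L)
  have Lr: "L \<le> ?r" unfolding L_def by (rule L_le_r[OF nw])
  have eb0: "0 \<le> eb" using ep unfolding eb_def by simp
  have "eta * s \<le> eta * L" using sL eta by (intro mult_left_mono) auto
  then have "h \<le> (eta - eb) * L"
    unfolding h_def by (simp add: left_diff_distrib)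
  also have "\<dots> \<le> hs" unfolding hs_def using Lr ebl by (intro mult_left_mono) simp_all
  finally have hle: "h \<le> hs" .
  have a1: "ep * L - b - eta * s = - h - t"
    unfolding h_def t_def eb_def D_def by (simp add: field_simps)
  have a2: "en * L + b - eta * s = - h + t"
    unfolding h_def t_def eb_def D_def by (simp add: field_simps)
  have Ew: "rob_err_cd eta ep en w b = (1/2) * (Phi (- h - t) + Phi (- h + t))"
    unfolding cd_formula[OF nw ep(1)[THEN order.trans[OF _ ep(2)]] ep(1)]
    unfolding s_def[symmetric] L_def[symmetric] a1 a2 by (simp add: algebra_simps)
  have Eu: "rob_err_cd eta ep en (uvec :: real^'d) (D * ?r) = Phi (- hs)"
  proof -
    have "rob_err_cd eta ep en (uvec :: real^'d) (D * ?r)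
        = 1/2 * Phi (ep * ?r - D * ?r - eta * ?r) + 1/2 * Phi (en * ?r + D * ?r - eta * ?r)"
      using ep by (subst cd_formula) (auto simp: uvec_props)
    also have "ep * ?r - D * ?r - eta * ?r = - hs" unfolding hs_def D_def eb_def by (simp add: field_simps)
    also have "en * ?r + D * ?r - eta * ?r = - hs" unfolding hs_def D_def eb_def by (simp add: field_simps)
    finally show ?thesis by simp
  qed
  have all: "\<forall>(w'::real^'d) b'. norm w' = 1 \<longrightarrow> rob_err_cd eta ep en w b \<le> rob_err_cd eta ep en w' b'"
    using m by (simp add: is_rob_minimizer_def)
  have "rob_err_cd eta ep en w b \<le> rob_err_cd eta ep en (uvec :: real^'d) (D * ?r)"
    by (rule all[rule_format, OF uvec_props(1)])
  then have le: "Phi (- h - t) + Phi (- h + t) \<le> 2 * Phi (- hs)" using Ew Eu by simp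
  have eq: "Phi (- h - t) + Phi (- h + t) = 2 * Phi (- hs)"
    using le Phi_G(1)[OF hs hle, of t] by simp
  from Phi_G(2)[OF hs hle eq] have t0: "t = 0" and hh: "h = hs" by auto
  have "eta * (L - s) + (eta - eb) * (?r - L) = 0"
    using hh unfolding h_def hs_def by (simp add: algebra_simps)
  moreover have "eta * (L - s) \<ge> 0" using eta sL by simp
  moreover have "(eta - eb) * (?r - L) \<ge> 0" using ebl Lr by simp
  ultimately have "eta * (L - s) = 0" "(eta - eb) * (?r - L) = 0" by linarith+
  then have Ls: "L = s" and Lr': "L = ?r" using eta ebl by auto
  have bb: "b = D * ?r" using t0 Lr' unfolding t_def by simp
  show ?thesis using Ls Lr' bb unfolding s_def L_def D_def by (intro conjI) linarith+
qed

theorem corollary2: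
  fixes eta eps eps_pos eps_neg :: real
    and w w' :: "real ^ 'd::finite"
    and b b' :: real
  assumes "eta > 0"
    and "0 < eps_neg" and "eps_neg < eps_pos" and "eps_pos < eta"
    and "0 < eps" and "eps < eta"
    and "is_rob_minimizer eta eps_pos eps_neg w b"
    and "is_rob_minimizer eta eps eps w' b'"
  shows "rob_err_cond eta w b eps (-1) - rob_err_cond eta w' b' eps (-1)
         > rob_err_cond eta w b eps 1 - rob_err_cond eta w' b' eps 1"
proof -
  let ?r = "sqrt (real CARD('d))"
  have r: "?r > 0" by simp
  have m1: "(\<Sum>i\<in>UNIV. w $ i) = ?r \<and> (\<Sum>i\<in>UNIV. \<bar>w $ i\<bar>) = ?r \<and> b = (eps_pos - eps_neg) / 2 * ?r"
    using assms by (intro minimizer_char) auto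
  have m2: "(\<Sum>i\<in>UNIV. w' $ i) = ?r \<and> (\<Sum>i\<in>UNIV. \<bar>w' $ i\<bar>) = ?r \<and> b' = (eps - eps) / 2 * ?r"
    using assms by (intro minimizer_char) auto
  have nw: "norm w = 1" "norm w' = 1" using assms(7,8) by (auto simp: is_rob_minimizer_def)
  have "(eps_pos - eps_neg) * ?r > 0" using r assms by simp
  then have bpos: "b > 0" using m1 by simp
  let ?c = "eps * ?r - eta * ?r"
  have s1: "(\<Sum>i\<in>UNIV. w $ i) = ?r" and L1: "(\<Sum>i\<in>UNIV. \<bar>w $ i\<bar>) = ?r" using m1 by auto
  have s2: "(\<Sum>i\<in>UNIV. w' $ i) = ?r" and L2: "(\<Sum>i\<in>UNIV. \<bar>w' $ i\<bar>) = ?r" and b2: "b' = 0"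
    using m2 by auto
  have e: "0 \<le> eps" using assms by simp
  have R1: "rob_err_cond eta w b eps (-1) = Phi (?c + b)"
  proof -
    have "rob_err_cond eta w b eps (-1) = Phi (eps * (\<Sum>i\<in>UNIV. \<bar>w $ i\<bar>) - (-1) * b - eta * (\<Sum>i\<in>UNIV. w $ i))"
      by (rule rob_err_formula[OF nw(1) _ e]) simp
    then show ?thesis by (simp add: s1 L1 algebra_simps)
  qed
  have R2: "rob_err_cond eta w b eps 1 = Phi (?c - b)"
  proof -
    have "rob_err_cond eta w b eps 1 = Phi (eps * (\<Sum>i\<in>UNIV. \<bar>w $ i\<bar>) - 1 * b - eta * (\<Sum>i\<in>UNIV. w $ i))"
      by (rule rob_err_formula[OF nw(1) _ e]) simp
    then show ?thesis by (simp add: s1 L1 algebra_simps)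
  qed
  have R3: "rob_err_cond eta w' b' eps (-1) = Phi (?c)"
  proof -
    have "rob_err_cond eta w' b' eps (-1) = Phi (eps * (\<Sum>i\<in>UNIV. \<bar>w' $ i\<bar>) - (-1) * b' - eta * (\<Sum>i\<in>UNIV. w' $ i))"
      by (rule rob_err_formula[OF nw(2) _ e]) simp
    then show ?thesis by (simp add: s2 L2 b2 algebra_simps)
  qed
  have R4: "rob_err_cond eta w' b' eps 1 = Phi (?c)"
  proof -
    have "rob_err_cond eta w' b' eps 1 = Phi (eps * (\<Sum>i\<in>UNIV. \<bar>w' $ i\<bar>) - 1 * b' - eta * (\<Sum>i\<in>UNIV. w' $ i))"
      by (rule rob_err_formula[OF nw(2) _ e]) simp
    then show ?thesis by (simp add: s2 L2 b2 algebra_simps)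
  qed
  have "Phi (?c - b) < Phi (?c + b)" using bpos by (intro Phi_strict_mono) simp
  then show ?thesis unfolding R1 R2 R3 R4 by simp
qed

end
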